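(* Let $t\geqslant 2$ be an integer, let $r\in\{2t,2t+1\}$, and set $\ell^*=5$ if $r=2t$ and $\ell^*=7$ if $r=2t+1$. Then for every $n\geqslant 2r-1$, $$I(n,2r-1,r)\geqslant 2\binom{2t-3}{t}+\ell^*\binom{2t-2}{t-1}.$$ Moreover, for every $n\geqslant 2r$, $$N(n,2r-1,r)=I(n,2r-1,r)\geqslant N(n,2r,r),$$ and consequently $N(n,2r-1,r)\geqslant 2\binom{2t-3}{t}+\ell^*\binom{2t-2}{t-1}$.
   Context: $\mathrm{Sym}_n$ is the symmetric group of permutations of $[n]=\{1,\dots,n\}$. The Hamming distance between $\pi,\tau\in\mathrm{Sym}_n$ is $d(\pi,\tau)=|\{i\in[n]:\pi(i)\neq\tau(i)\}|$, and $B_r(\pi)=\{\tau\in\mathrm{Sym}_n: d(\pi,\tau)\leqslant r\}$. For integers $d,r$, $I(n,d,r)=\max_{\pi,\tau\in\mathrm{Sym}_n,\ d(\pi,\tau)=d}|B_r(\pi)\cap B_r(\tau)|$ and $N(n,d,r)=\max_{\pi,\tau\in\mathrm{Sym}_n,\ d(\pi,\tau)\geqslant d}|B_r(\pi)\cap B_r(\tau)|$. Binomial convention: $\binom{0}{0}=1$ and $\binom{p}{q}=0$ whenever $p<q$, $p<0$ or $q<0$. *)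

theory Defs
  imports Main "HOL-Combinatorics.Permutations"
begin

definition Sym :: "nat \<Rightarrow> (nat \<Rightarrow> nat) set" where
  "Sym n = {p. p permutes {1..n}}"

definition hdist :: "nat \<Rightarrow> (nat \<Rightarrow> nat) \<Rightarrow> (nat \<Rightarrow> nat) \<Rightarrow> nat" where
  "hdist n p q = card {i \<in> {1..n}. p i \<noteq> q i}"

definition ball_perm :: "nat \<Rightarrow> nat \<Rightarrow> (nat \<Rightarrow> nat) \<Rightarrow> (nat \<Rightarrow> nat) set" where
  "ball_perm n r p = {q \<in> Sym n. hdist n p q \<le> r}"

definition Iint :: "nat \<Rightarrow> nat \<Rightarrow> nat \<Rightarrow> nat" where
  "Iint n d r = Max {card (ball_perm n r p \<inter> ball_perm n r q) | p q.
                       p \<in> Sym n \<and> q \<in> Sym n \<and> hdist n p q = d}"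

definition Nint :: "nat \<Rightarrow> nat \<Rightarrow> nat \<Rightarrow> nat" where
  "Nint n d r = Max {card (ball_perm n r p \<inter> ball_perm n r q) | p q.
                       p \<in> Sym n \<and> q \<in> Sym n \<and> hdist n p q \<ge> d}"

end

theory Submission
  imports Defs
begin


lemma hd_sym: "hdist n p q = hdist n q p"
  unfolding hdist_def by (metis (mono_tags, lifting))

lemma hd_le: "hdist n p q \<le> n"
proof -
  have "hdist n p q \<le> card {1..n}" unfolding hdist_def by (rule card_mono) auto
  then show ?thesis by simp
qed

lemma hd_tri: "hdist n p q \<le> hdist n p x + hdist n x q"
proof -
  have "{i \<in> {1..n}. p i \<noteq> q i} \<subseteq> {i \<in> {1..n}. p i \<noteq> x i} \<union> {i \<in> {1..n}. x i \<noteq> q i}" by auto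
  hence "hdist n p q \<le> card ({i \<in> {1..n}. p i \<noteq> x i} \<union> {i \<in> {1..n}. x i \<noteq> q i})"
    unfolding hdist_def by (intro card_mono) auto
  also have "\<dots> \<le> hdist n p x + hdist n x q" unfolding hdist_def by (rule card_Un_le)
  finally show ?thesis .
qed

lemma finite_Sym: "finite (Sym n)"
  unfolding Sym_def by (rule finite_permutations) simp

lemma finite_ball: "finite (ball_perm n r p)"
  unfolding ball_perm_def using finite_Sym by simp

lemma finite_img2: "finite A \<Longrightarrow> finite {f p q | p q. p \<in> A \<and> q \<in> A \<and> P p q}"
proof -
  assume "finite A"
  have "{f p q | p q. p \<in> A \<and> q \<in> A \<and> P p q} \<subseteq> (\<lambda>(p,q). f p q) ` (A \<times> A)" by auto
  thus ?thesis using \<open>finite A\<close> by (meson finite_SigmaI finite_imageI finite_subset)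
qed

lemma Iint_ge: "p \<in> Sym n \<Longrightarrow> q \<in> Sym n \<Longrightarrow> hdist n p q = d \<Longrightarrow>
   card (ball_perm n r p \<inter> ball_perm n r q) \<le> Iint n d r"
  unfolding Iint_def by (rule Max_ge) (use finite_img2[OF finite_Sym] in auto)

lemma Nint_ge: "p \<in> Sym n \<Longrightarrow> q \<in> Sym n \<Longrightarrow> hdist n p q \<ge> d \<Longrightarrow>
   card (ball_perm n r p \<inter> ball_perm n r q) \<le> Nint n d r"
  unfolding Nint_def by (rule Max_ge) (use finite_img2[OF finite_Sym] in auto)

lemma Nint_le:
  assumes "p0 \<in> Sym n" "q0 \<in> Sym n" "hdist n p0 q0 \<ge> d"
    and "\<And>p q. p \<in> Sym n \<Longrightarrow> q \<in> Sym n \<Longrightarrow> hdist n p q \<ge> d \<Longrightarrow>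
        card (ball_perm n r p \<inter> ball_perm n r q) \<le> M"
  shows "Nint n d r \<le> M"
  unfolding Nint_def
  apply (subst Max_le_iff)
  using finite_img2[OF finite_Sym] assms by auto

lemma Iint_attained:
  assumes "p0 \<in> Sym n" "q0 \<in> Sym n" "hdist n p0 q0 = d"
  shows "\<exists>p q. p \<in> Sym n \<and> q \<in> Sym n \<and> hdist n p q = d \<and> Iint n d r = card (ball_perm n r p \<inter> ball_perm n r q)"
proof -
  have "Iint n d r \<in> {card (ball_perm n r p \<inter> ball_perm n r q) | p q.
                       p \<in> Sym n \<and> q \<in> Sym n \<and> hdist n p q = d}"
    unfolding Iint_def by (rule Max_in) (use finite_img2[OF finite_Sym] assms in auto)
  thus ?thesis by blast
qed

lemma disjoint_far:
  assumes "hdist n p q > 2*r"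
  shows "ball_perm n r p \<inter> ball_perm n r q = {}"
proof (rule ccontr)
  assume "ball_perm n r p \<inter> ball_perm n r q \<noteq> {}"
  then obtain x where "hdist n p x \<le> r" "hdist n q x \<le> r" unfolding ball_perm_def by auto
  moreover have "hdist n p q \<le> hdist n p x + hdist n x q" by (rule hd_tri)
  ultimately show False using assms hd_sym[of n x q] by linarith
qed

lemma hd_invcomp:
  assumes "p permutes S"
  shows "hdist n (inv p \<circ> f) (inv p \<circ> g) = hdist n f g"
proof -
  have "\<And>i. (inv p (f i) \<noteq> inv p (g i)) = (f i \<noteq> g i)"
    by (metis assms permutes_inverses(1))
  thus ?thesis unfolding hdist_def by simp
qed

lemma norm:
  assumes p: "p \<in> Sym n" and q: "q \<in> Sym n"
  shows "inv p \<circ> q \<in> Sym n" "hdist n id (inv p \<circ> q) = hdist n p q"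
    "card (ball_perm n r p \<inter> ball_perm n r q) \<le> card (ball_perm n r id \<inter> ball_perm n r (inv p \<circ> q))"
proof -
  have pp: "p permutes {1..n}" "q permutes {1..n}" using p q unfolding Sym_def by auto
  show "inv p \<circ> q \<in> Sym n" unfolding Sym_def using pp by (simp add: permutes_compose permutes_inv)
  have ip: "inv p \<circ> p = id" using pp permutes_inv_o by auto
  have hid: "\<And>g. hdist n id (inv p \<circ> g) = hdist n p g"
    using hd_invcomp[OF pp(1), of n p] ip by simp
  show "hdist n id (inv p \<circ> q) = hdist n p q" by (rule hid)
  show "card (ball_perm n r p \<inter> ball_perm n r q) \<le> card (ball_perm n r id \<inter> ball_perm n r (inv p \<circ> q))"
  proof (rule card_inj_on_le[where f="\<lambda>g. inv p \<circ> g"])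
    show "inj_on ((\<circ>) (inv p)) (ball_perm n r p \<inter> ball_perm n r q)"
      by (rule inj_onI) (metis fun.map_comp id_comp permutes_inv_o(1) pp(1))
    show "(\<circ>) (inv p) ` (ball_perm n r p \<inter> ball_perm n r q) \<subseteq> ball_perm n r id \<inter> ball_perm n r (inv p \<circ> q)"
      using hid hd_invcomp[OF pp(1)] pp
      by (auto simp: ball_perm_def Sym_def permutes_compose permutes_inv)
    show "finite (ball_perm n r id \<inter> ball_perm n r (inv p \<circ> q))" using finite_ball by blast
  qed
qed

lemma inI: "\<rho> \<in> ball_perm n r p \<inter> ball_perm n r q \<longleftrightarrow> \<rho> permutes {1..n} \<and> hdist n p \<rho> \<le> r \<and> hdist n q \<rho> \<le> r"
  unfolding ball_perm_def Sym_def by auto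




lemma cnt_ins: "finite A \<Longrightarrow> card {i \<in> insert a A. P i} =
   (if P a \<and> a \<notin> A then Suc (card {i \<in> A. P i}) else card {i \<in> A. P i})"
proof -
  assume f: "finite A"
  show ?thesis
  proof (cases "P a \<and> a \<notin> A")
    case True
    hence "{i \<in> insert a A. P i} = insert a {i \<in> A. P i}" by auto
    thus ?thesis using True f by simp
  next
    case False
    hence "{i \<in> insert a A. P i} = {i \<in> A. P i}" by auto
    thus ?thesis using False by simp
  qed
qed

lemma hd_loc:
  assumes "F \<subseteq> {1..n}" "\<And>i. i \<in> {1..n} \<Longrightarrow> i \<notin> F \<Longrightarrow> f i = f' i \<and> g i = g' i"
  shows "hdist n f g + card {i \<in> F. f' i \<noteq> g' i} = hdist n f' g' + card {i \<in> F. f i \<noteq> g i}"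
proof -
  have fF: "finite F" using assms(1) finite_subset by blast
  have s1: "{i \<in> {1..n}. f i \<noteq> g i} = {i \<in> {1..n} - F. f i \<noteq> g i} \<union> {i \<in> F. f i \<noteq> g i}"
    using assms(1) by auto
  have s2: "{i \<in> {1..n}. f' i \<noteq> g' i} = {i \<in> {1..n} - F. f i \<noteq> g i} \<union> {i \<in> F. f' i \<noteq> g' i}"
    using assms by auto
  have c1: "hdist n f g = card {i \<in> {1..n} - F. f i \<noteq> g i} + card {i \<in> F. f i \<noteq> g i}"
    unfolding hdist_def s1 by (rule card_Un_disjoint) (use fF in auto)
  have c2: "hdist n f' g' = card {i \<in> {1..n} - F. f i \<noteq> g i} + card {i \<in> F. f' i \<noteq> g' i}"
    unfolding hdist_def s2 by (rule card_Un_disjoint) (use fF in auto)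
  show ?thesis using c1 c2 by simp
qed

lemma char:
  assumes h: "hdist n id s = 2*r" and rho: "\<rho> \<in> ball_perm n r id \<inter> ball_perm n r s"
    and i: "i \<in> {1..n}"
  shows "\<rho> i = i \<or> \<rho> i = s i"
proof (rule ccontr)
  assume c: "\<not> (\<rho> i = i \<or> \<rho> i = s i)"
  define X where "X = {i \<in> {1..n}. id i \<noteq> \<rho> i}"
  define Y where "Y = {i \<in> {1..n}. s i \<noteq> \<rho> i}"
  have cx: "card X \<le> r" "card Y \<le> r" using rho unfolding X_def Y_def ball_perm_def hdist_def by auto
  have fX: "finite X" "finite Y" unfolding X_def Y_def by auto
  have "{i \<in> {1..n}. id i \<noteq> s i} \<subseteq> X \<union> Y" unfolding X_def Y_def by auto
  hence a1: "2*r \<le> card (X \<union> Y)" using h fX unfolding hdist_def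
    by (metis card_mono finite_Un)
  have a2: "card (X \<union> Y) + card (X \<inter> Y) = card X + card Y"
    using card_Un_Int[OF fX] by simp
  have "i \<in> X \<inter> Y" using c i unfolding X_def Y_def by auto
  hence a3: "card (X \<inter> Y) \<ge> 1" using fX
    by (metis One_nat_def Suc_leI card_gt_0_iff empty_iff finite_Int)
  show False using cx a1 a2 a3 by linarith
qed



lemma comp_cancel_surj: "surj t \<Longrightarrow> f \<circ> t = g \<circ> t \<Longrightarrow> f = g"
  proof (rule ext)
  fix x assume s: "surj t" and e: "f \<circ> t = g \<circ> t"
  obtain y where "x = t y" using s by (metis surjD)
  thus "f x = g x" using e by (metis comp_apply)
qed

lemma cardsum: "finite A \<Longrightarrow> card {i \<in> A. P i} = (\<Sum>i\<in>A. if P i then 1 else 0)"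
  by (simp add: sum.If_cases Int_def conj_commute)
lemma card2: "a \<noteq> b \<Longrightarrow> card {i \<in> {a,b}. P i} = (if P a then 1 else 0) + (if P b then 1 else 0)"
  by (subst cardsum) auto
lemma card4: "distinct [a,b,c,d] \<Longrightarrow> card {i \<in> {a,b,c,d}. P i} =
  (if P a then 1 else 0) + (if P b then 1 else 0) + (if P c then 1 else 0) + (if P d then 1 else 0)"
  by (subst cardsum) (auto simp: add.assoc)

lemma keyA:
  assumes sp: "s permutes {1..n}" and h: "hdist n id s = 2*r"
    and a: "a \<in> {1..n}" "s a \<noteq> a" "s (s a) \<noteq> a"
  shows "\<exists>s'\<in>Sym n. hdist n id s' = 2*r - 1 \<and> card (ball_perm n r id \<inter> ball_perm n r s) \<le> card (ball_perm n r id \<inter> ball_perm n r s')"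
proof -
  define b where "b = s a"
  define c where "c = s b"
  have inj: "inj s" using sp permutes_inj by blast
  have ab: "a \<noteq> b" using a b_def by auto
  have bc: "b \<noteq> c" using ab unfolding b_def c_def by (simp add: inj_eq[OF inj])
  have ca: "c \<noteq> a" using a unfolding b_def c_def by auto
  have inn1: "b \<in> {1..n}" unfolding b_def using a(1) permutes_in_image[OF sp] by blast
  have inn: "b \<in> {1..n}" "c \<in> {1..n}" using inn1 unfolding c_def using permutes_in_image[OF sp] by blast+
  define tau where "tau = transpose a b"
  have taup: "tau permutes {1..n}" unfolding tau_def by (rule permutes_swap_id) (use a inn in auto)
  define s' where "s' = s \<circ> tau"
  have s'v: "s' a = c" "s' b = b" "\<And>i. i \<noteq> a \<Longrightarrow> i \<noteq> b \<Longrightarrow> s' i = s i"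
    unfolding s'_def tau_def using b_def c_def by auto
  have s'S: "s' \<in> Sym n" unfolding Sym_def s'_def using sp taup by (simp add: permutes_compose)
  have F: "{a,b} \<subseteq> {1..n}" using a inn by auto
  have "hdist n id s + card {i \<in> {a,b}. id i \<noteq> s' i} = hdist n id s' + card {i \<in> {a,b}. id i \<noteq> s i}"
    by (rule hd_loc[OF F]) (use s'v in auto)
  hence hs': "hdist n id s' = 2*r - 1"
    using h s'v ab bc ca unfolding card2[OF ab] by (simp add: b_def[symmetric] c_def[symmetric])
  define phi where "phi = (\<lambda>\<rho>. if \<rho> b = c then \<rho> \<circ> tau else \<rho>)"
  define I where "I = ball_perm n r id \<inter> ball_perm n r s"
  define I' where "I' = ball_perm n r id \<inter> ball_perm n r s'"
  have mem: "phi \<rho> \<in> I' \<and> (\<rho> b = c \<longrightarrow> \<rho> a = b) \<and> (\<rho> b \<noteq> c \<longrightarrow> \<rho> a = a)" if rI: "\<rho> \<in> I" for \<rho>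
  proof -
    have rp: "\<rho> permutes {1..n}" "hdist n id \<rho> \<le> r" "hdist n s \<rho> \<le> r" using rI unfolding I_def inI by auto
    have ch: "\<And>i. i \<in> {1..n} \<Longrightarrow> \<rho> i = i \<or> \<rho> i = s i"
      using char[OF h] rI unfolding I_def by blast
    have ra: "\<rho> a = a \<or> \<rho> a = b" using ch a b_def by auto
    have rb: "\<rho> b = b \<or> \<rho> b = c" using ch inn c_def by auto
    have rinj: "inj \<rho>" using rp permutes_inj by blast
    show ?thesis
    proof (cases "\<rho> b = c")
      case True
      have "b \<in> \<rho> ` {1..n}" using permutes_image[OF rp(1)] inn by auto
      then obtain x where x: "x \<in> {1..n}" "\<rho> x = b" by auto
      have "x = a"
      proof -
        have "\<rho> x = x \<or> \<rho> x = s x" using ch x by auto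
        thus ?thesis using x True bc unfolding b_def by (auto simp: inj_eq[OF inj])
      qed
      hence rab: "\<rho> a = b" using x by simp
      have pv: "phi \<rho> = \<rho> \<circ> tau" unfolding phi_def using True by simp
      have pa: "(\<rho> \<circ> tau) a = c" "(\<rho> \<circ> tau) b = b" "\<And>i. i \<noteq> a \<Longrightarrow> i \<noteq> b \<Longrightarrow> (\<rho> \<circ> tau) i = \<rho> i"
        unfolding tau_def using True rab by auto
      have "hdist n id \<rho> + card {i \<in> {a,b}. id i \<noteq> (\<rho> \<circ> tau) i} = hdist n id (\<rho> \<circ> tau) + card {i \<in> {a,b}. id i \<noteq> \<rho> i}"
        by (rule hd_loc[OF F]) (use pa in auto)
      hence d1: "hdist n id (\<rho> \<circ> tau) \<le> r" using rp pa rab True ab bc ca unfolding card2[OF ab] by simp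
      have "hdist n s \<rho> + card {i \<in> {a,b}. s' i \<noteq> (\<rho> \<circ> tau) i} = hdist n s' (\<rho> \<circ> tau) + card {i \<in> {a,b}. s i \<noteq> \<rho> i}"
        by (rule hd_loc[OF F]) (use pa s'v in auto)
      hence d2: "hdist n s' (\<rho> \<circ> tau) \<le> r" using rp pa s'v rab True ab bc ca unfolding card2[OF ab]
        by (simp add: b_def[symmetric] c_def[symmetric])
      have "\<rho> \<circ> tau permutes {1..n}" using rp taup by (simp add: permutes_compose)
      thus ?thesis using pv d1 d2 rab True unfolding I'_def inI by simp
    next
      case False
      hence rbb: "\<rho> b = b" using rb by simp
      hence raa: "\<rho> a = a" using ra ab by (auto simp: inj_eq[OF rinj])
      have pv: "phi \<rho> = \<rho>" unfolding phi_def using False by simp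
      have "hdist n s \<rho> + card {i \<in> {a,b}. s' i \<noteq> \<rho> i} = hdist n s' \<rho> + card {i \<in> {a,b}. s i \<noteq> \<rho> i}"
        by (rule hd_loc[OF F]) (use s'v in auto)
      hence d2: "hdist n s' \<rho> \<le> r" using rp s'v rbb raa ab bc ca unfolding card2[OF ab]
        by (simp add: b_def[symmetric] c_def[symmetric])
      thus ?thesis using pv rp raa False unfolding I'_def inI by simp
    qed
  qed
  have "card I \<le> card I'"
  proof (rule card_inj_on_le[where f=phi])
    show "phi ` I \<subseteq> I'" using mem by auto
    show "finite I'" unfolding I'_def using finite_ball by blast
    show "inj_on phi I"
    proof (rule inj_onI)
      fix x y assume xy: "x \<in> I" "y \<in> I" "phi x = phi y"
      have sur: "surj tau" using taup permutes_surj by blast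
      show "x = y"
      proof (cases "x b = c"; cases "y b = c")
        assume "x b = c" "y b = c"
        thus ?thesis using xy comp_cancel_surj[OF sur] unfolding phi_def by simp
      next
        assume c1: "x b = c" "y b \<noteq> c"
        hence "phi x a = c" "phi y a = a" using mem[OF xy(1)] mem[OF xy(2)] unfolding phi_def tau_def by auto
        thus ?thesis using xy ca by simp
      next
        assume c1: "x b \<noteq> c" "y b = c"
        hence "phi y a = c" "phi x a = a" using mem[OF xy(1)] mem[OF xy(2)] unfolding phi_def tau_def by auto
        thus ?thesis using xy ca by simp
      next
        assume "x b \<noteq> c" "y b \<noteq> c"
        thus ?thesis using xy unfolding phi_def by simp
      qed
    qed
  qed
  thus ?thesis using s'S hs' unfolding I_def I'_def by blast
qed



lemma keyB:
  assumes sp: "s permutes {1..n}" and h: "hdist n id s = 2*r" and r2: "r \<ge> 2"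
    and inv2: "\<And>a. a \<in> {1..n} \<Longrightarrow> s a \<noteq> a \<Longrightarrow> s (s a) = a"
  shows "\<exists>s'\<in>Sym n. hdist n id s' = 2*r - 1 \<and> card (ball_perm n r id \<inter> ball_perm n r s) \<le> card (ball_perm n r id \<inter> ball_perm n r s')"
proof -
  define D where "D = {i \<in> {1..n}. id i \<noteq> s i}"
  have cD: "card D = 2*r" using h unfolding D_def hdist_def .
  have fD: "finite D" unfolding D_def by auto
  have inj: "inj s" using sp permutes_inj by blast
  have inS: "\<And>x. s x \<in> {1..n} \<longleftrightarrow> x \<in> {1..n}" using permutes_in_image[OF sp] by blast
  have "D \<noteq> {}" using cD r2 by (intro notI) simp
  then obtain a where aD: "a \<in> D" by auto
  define b where "b = s a"
  have a: "a \<in> {1..n}" "s a \<noteq> a" using aD unfolding D_def by auto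
  have sb: "s b = a" using inv2 a b_def by simp
  have ab: "a \<noteq> b" using a b_def by auto
  have b: "b \<in> {1..n}" using a inS b_def by blast
  have bD: "b \<in> D" using b sb ab unfolding D_def by auto
  have "card (D - {a,b}) = 2*r - 2" using cD fD aD bD ab by (subst card_Diff_subset) auto
  hence "D - {a,b} \<noteq> {}" using r2 by (intro notI) simp
  then obtain c where cD': "c \<in> D" "c \<noteq> a" "c \<noteq> b" by auto
  define d where "d = s c"
  have c: "c \<in> {1..n}" "s c \<noteq> c" using cD' unfolding D_def by auto
  have sd: "s d = c" using inv2 c d_def by simp
  have d: "d \<in> {1..n}" using c inS d_def by blast
  have dc: "d \<noteq> c" using c d_def by auto
  have da: "d \<noteq> a" using cD' sb unfolding d_def by (auto simp: inj_eq[OF inj])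
  have db: "d \<noteq> b" using cD' unfolding d_def b_def by (auto simp: inj_eq[OF inj])
  have sa: "s a = b" "s c = d" using b_def d_def by auto
  have dist: "distinct [a,b,c,d]" using ab cD' dc da db by auto
  define tau where "tau = transpose b c \<circ> transpose b d"
  have taup: "tau permutes {1..n}" unfolding tau_def
    by (intro permutes_compose permutes_swap_id) (use b c d in auto)
  have tv: "tau a = a" "tau b = d" "tau c = b" "tau d = c" "\<And>i. i \<notin> {a,b,c,d} \<Longrightarrow> tau i = i"
    unfolding tau_def using dist by (auto simp: transpose_def)
  define s' where "s' = s \<circ> tau"
  have s'v: "s' a = b" "s' b = c" "s' c = a" "s' d = d" "\<And>i. i \<notin> {a,b,c,d} \<Longrightarrow> s' i = s i"
    unfolding s'_def using tv b_def sb sd d_def by auto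
  have s'S: "s' \<in> Sym n" unfolding Sym_def s'_def using sp taup by (simp add: permutes_compose)
  have F: "{a,b,c,d} \<subseteq> {1..n}" using a b c d by auto
  have "hdist n id s + card {i \<in> {a,b,c,d}. id i \<noteq> s' i} = hdist n id s' + card {i \<in> {a,b,c,d}. id i \<noteq> s i}"
    by (rule hd_loc[OF F]) (use s'v in auto)
  hence hs': "hdist n id s' = 2*r - 1"
    using h s'v dist sb sd unfolding card4[OF dist] by (simp add: b_def[symmetric] d_def[symmetric])
  define phi where "phi = (\<lambda>\<rho>. if \<rho> c = d then \<rho> \<circ> tau else \<rho>)"
  define I where "I = ball_perm n r id \<inter> ball_perm n r s"
  define I' where "I' = ball_perm n r id \<inter> ball_perm n r s'"
  have mem: "phi \<rho> \<in> I' \<and> (\<rho> c = c \<or> \<rho> c = d) \<and> (\<rho> b = a \<or> \<rho> b = b)" if rI: "\<rho> \<in> I" for \<rho>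
  proof -
    have rp: "\<rho> permutes {1..n}" "hdist n id \<rho> \<le> r" "hdist n s \<rho> \<le> r" using rI unfolding I_def inI by auto
    have ch: "\<And>i. i \<in> {1..n} \<Longrightarrow> \<rho> i = i \<or> \<rho> i = s i"
      using char[OF h] rI unfolding I_def by blast
    have rinj: "inj \<rho>" using rp permutes_inj by blast
    have rab: "(\<rho> a = a \<and> \<rho> b = b) \<or> (\<rho> a = b \<and> \<rho> b = a)"
      using ch[OF a(1)] ch[OF b] sb ab injD[OF rinj, of a b] unfolding b_def[symmetric] by auto
    have rcd: "(\<rho> c = c \<and> \<rho> d = d) \<or> (\<rho> c = d \<and> \<rho> d = c)"
      using ch[OF c(1)] ch[OF d] sd dc injD[OF rinj, of c d] unfolding d_def[symmetric] by auto
    have loc: "\<And>f g f' g'. (\<And>i. i \<notin> {a,b,c,d} \<Longrightarrow> f i = f' i \<and> g i = g' i) \<Longrightarrow>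
      hdist n f g + card {i \<in> {a,b,c,d}. f' i \<noteq> g' i} = hdist n f' g' + card {i \<in> {a,b,c,d}. f i \<noteq> g i}"
      by (rule hd_loc[OF F]) auto
    show ?thesis
    proof (cases "\<rho> c = d")
      case True
      hence rdc: "\<rho> d = c" using rcd dc by auto
      have pv: "phi \<rho> = \<rho> \<circ> tau" unfolding phi_def using True by simp
      have pa: "(\<rho> \<circ> tau) a = \<rho> a" "(\<rho> \<circ> tau) b = c" "(\<rho> \<circ> tau) c = \<rho> b" "(\<rho> \<circ> tau) d = d"
        "\<And>i. i \<notin> {a,b,c,d} \<Longrightarrow> (\<rho> \<circ> tau) i = \<rho> i"
        using tv True rdc by auto
      have e1: "hdist n id \<rho> + card {i \<in> {a,b,c,d}. id i \<noteq> (\<rho> \<circ> tau) i} = hdist n id (\<rho> \<circ> tau) + card {i \<in> {a,b,c,d}. id i \<noteq> \<rho> i}"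
        by (rule loc) (use pa in auto)
      have e2: "hdist n s \<rho> + card {i \<in> {a,b,c,d}. s' i \<noteq> (\<rho> \<circ> tau) i} = hdist n s' (\<rho> \<circ> tau) + card {i \<in> {a,b,c,d}. s i \<noteq> \<rho> i}"
        by (rule loc) (use pa s'v in auto)
      have d1: "hdist n id (\<rho> \<circ> tau) \<le> r \<and> hdist n s' (\<rho> \<circ> tau) \<le> r"
        using rab
      proof
        assume x: "\<rho> a = a \<and> \<rho> b = b"
        have "card {i \<in> {a,b,c,d}. id i \<noteq> (\<rho> \<circ> tau) i} = 2" "card {i \<in> {a,b,c,d}. id i \<noteq> \<rho> i} = 2"
          "card {i \<in> {a,b,c,d}. s' i \<noteq> (\<rho> \<circ> tau) i} = 2" "card {i \<in> {a,b,c,d}. s i \<noteq> \<rho> i} = 2"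
          unfolding card4[OF dist] using dist by (simp_all add: x tv s'v True rdc sa sb sd)
        thus ?thesis using e1 e2 rp(2,3) by linarith
      next
        assume x: "\<rho> a = b \<and> \<rho> b = a"
        have "card {i \<in> {a,b,c,d}. id i \<noteq> (\<rho> \<circ> tau) i} = 3" "card {i \<in> {a,b,c,d}. id i \<noteq> \<rho> i} = 4"
          "card {i \<in> {a,b,c,d}. s' i \<noteq> (\<rho> \<circ> tau) i} = 0" "card {i \<in> {a,b,c,d}. s i \<noteq> \<rho> i} = 0"
          unfolding card4[OF dist] using dist by (simp_all add: x tv s'v True rdc sa sb sd)
        thus ?thesis using e1 e2 rp(2,3) by linarith
      qed
      have "\<rho> \<circ> tau permutes {1..n}" using rp taup by (simp add: permutes_compose)
      thus ?thesis using pv d1 True rab unfolding I'_def inI by auto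
    next
      case False
      hence rcc: "\<rho> c = c" "\<rho> d = d" using rcd by auto
      have pv: "phi \<rho> = \<rho>" unfolding phi_def using False by simp
      have e2: "hdist n s \<rho> + card {i \<in> {a,b,c,d}. s' i \<noteq> \<rho> i} = hdist n s' \<rho> + card {i \<in> {a,b,c,d}. s i \<noteq> \<rho> i}"
        by (rule loc) (use s'v in auto)
      have d2: "hdist n s' \<rho> \<le> r"
        using rab
      proof
        assume x: "\<rho> a = a \<and> \<rho> b = b"
        have "card {i \<in> {a,b,c,d}. s' i \<noteq> \<rho> i} = 3" "card {i \<in> {a,b,c,d}. s i \<noteq> \<rho> i} = 4"
          unfolding card4[OF dist] using dist by (simp_all add: x rcc s'v sa sb sd)
        thus ?thesis using e2 rp(2,3) by linarith
      next
        assume x: "\<rho> a = b \<and> \<rho> b = a"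
        have "card {i \<in> {a,b,c,d}. s' i \<noteq> \<rho> i} = 2" "card {i \<in> {a,b,c,d}. s i \<noteq> \<rho> i} = 2"
          unfolding card4[OF dist] using dist by (simp_all add: x rcc s'v sa sb sd)
        thus ?thesis using e2 rp(2,3) by linarith
      qed
      thus ?thesis using pv rp rcc rab unfolding I'_def inI by auto
    qed
  qed
  have "card I \<le> card I'"
  proof (rule card_inj_on_le[where f=phi])
    show "phi ` I \<subseteq> I'" using mem by auto
    show "finite I'" unfolding I'_def using finite_ball by blast
    show "inj_on phi I"
    proof (rule inj_onI)
      fix x y assume xy: "x \<in> I" "y \<in> I" "phi x = phi y"
      have sur: "surj tau" using taup permutes_surj by blast
      show "x = y"
      proof (cases "x c = d"; cases "y c = d")
        assume "x c = d" "y c = d"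
        thus ?thesis using xy comp_cancel_surj[OF sur] unfolding phi_def by simp
      next
        assume c1: "x c = d" "y c \<noteq> d"
        hence "phi x c \<in> {a,b}" "phi y c = c" using mem[OF xy(1)] mem[OF xy(2)] tv unfolding phi_def by auto
        thus ?thesis using xy dist by auto
      next
        assume c1: "x c \<noteq> d" "y c = d"
        hence "phi y c \<in> {a,b}" "phi x c = c" using mem[OF xy(1)] mem[OF xy(2)] tv unfolding phi_def by auto
        thus ?thesis using xy dist by auto
      next
        assume "x c \<noteq> d" "y c \<noteq> d"
        thus ?thesis using xy unfolding phi_def by simp
      qed
    qed
  qed
  thus ?thesis using s'S hs' unfolding I_def I'_def by blast
qed



definition mkp :: "nat list \<Rightarrow> nat \<Rightarrow> nat" where
  "mkp L i = (if 1 \<le> i \<and> i \<le> length L then L!(i-1) else i)"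

definition sw :: "nat \<Rightarrow> nat set \<Rightarrow> nat \<Rightarrow> nat" where
  "sw c S i = (if c < i \<and> (i - c - 1) div 2 \<in> S then (if even (i - c - 1) then i + 1 else i - 1) else i)"

lemma mkp_perm:
  assumes "distinct L" "set L = {1..length L}"
  shows "mkp L permutes {1..length L}"
proof (rule bij_imp_permutes)
  let ?A = "{1..length L}"
  have im: "mkp L ` ?A \<subseteq> ?A"
  proof
    fix y assume "y \<in> mkp L ` ?A"
    then obtain i where i: "i \<in> ?A" "y = L!(i-1)" unfolding mkp_def by auto
    hence "y \<in> set L" by auto
    thus "y \<in> ?A" using assms by simp
  qed
  have inj: "inj_on (mkp L) ?A"
  proof (rule inj_onI)
    fix i j assume ij: "i \<in> ?A" "j \<in> ?A" "mkp L i = mkp L j"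
    hence "L!(i-1) = L!(j-1)" unfolding mkp_def by auto
    hence "i - 1 = j - 1" using ij assms(1) nth_eq_iff_index_eq by fastforce
    thus "i = j" using ij by auto
  qed
  show "bij_betw (mkp L) ?A ?A" unfolding bij_betw_def using inj endo_inj_surj[OF _ im inj] by simp
  show "\<And>x. x \<notin> ?A \<Longrightarrow> mkp L x = x" unfolding mkp_def by auto
qed

lemma sw_le: "i \<le> c \<Longrightarrow> sw c S i = i" unfolding sw_def by auto

lemma sw_gt: "c < i \<Longrightarrow> c < sw c S i"
proof -
  assume a: "c < i"
  have "odd (i - c - 1) \<Longrightarrow> c < i - 1" using a by presburger
  thus ?thesis using a unfolding sw_def by auto
qed

lemma sw_inv: "sw c S (sw c S i) = i"
proof (cases "c < i \<and> (i - c - 1) div 2 \<in> S")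
  case T: True
  have ci: "c < i" using T by simp
  show ?thesis
  proof (cases "even (i - c - 1)")
    case True
    have e: "sw c S i = i + 1" using T True unfolding sw_def by simp
    have "c < i + 1" using T by simp
    moreover have "(i + 1 - c - 1) div 2 = (i - c - 1) div 2" using ci True by presburger
    moreover have "\<not> even (i + 1 - c - 1)" using ci True by presburger
    ultimately show ?thesis unfolding e using T unfolding sw_def by simp
  next
    case False
    have e: "sw c S i = i - 1" using T False unfolding sw_def by simp
    have "c < i - 1" using ci False by presburger
    moreover have "(i - 1 - c - 1) div 2 = (i - c - 1) div 2" using ci False by presburger
    moreover have "even (i - 1 - c - 1)" using ci False by presburger
    ultimately show ?thesis unfolding e using T False unfolding sw_def by simp
  qed
next
  case False
  hence "sw c S i = i" unfolding sw_def by auto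
  thus ?thesis by simp
qed

lemma sw_perm:
  assumes "S \<subseteq> {..<m}" "c + 2*m \<le> n"
  shows "sw c S permutes {1..n}"
  unfolding permutes_def
proof (intro conjI allI impI)
  fix x assume x: "x \<notin> {1..n}"
  show "sw c S x = x"
  proof (cases "x = 0")
    case True thus ?thesis unfolding sw_def by simp
  next
    case False
    hence "x > n" using x by auto
    hence "(x - c - 1) div 2 \<ge> m" using assms(2) by presburger
    hence "(x - c - 1) div 2 \<notin> S" using assms(1) by auto
    thus ?thesis unfolding sw_def by simp
  qed
next
  fix y show "\<exists>!x. sw c S x = y"
    by (rule ex1I[where a="sw c S y"]) (simp add: sw_inv, metis sw_inv)
qed

lemma sw_pair: "sw c S (c + 2*j + 1) = (if j \<in> S then c + 2*j + 2 else c + 2*j + 1)"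
proof -
  have "(c + 2*j + 1 - c - 1) div 2 = j" "even (c + 2*j + 1 - c - 1)" by auto
  thus ?thesis unfolding sw_def by auto
qed

lemma sw_diff:
  assumes ST: "S \<subseteq> T" "T \<subseteq> {..<m}" and n: "c + 2*m \<le> n"
  shows "card {i \<in> {c+1..n}. sw c S i \<noteq> sw c T i} = 2 * card (T - S)"
proof -
  have eq: "{i \<in> {c+1..n}. sw c S i \<noteq> sw c T i} = (\<Union>j\<in>T - S. {c+2*j+1, c+2*j+2})"
  proof (rule set_eqI)
    fix i
    show "i \<in> {i \<in> {c+1..n}. sw c S i \<noteq> sw c T i} \<longleftrightarrow> i \<in> (\<Union>j\<in>T - S. {c+2*j+1, c+2*j+2})"
    proof
      assume "i \<in> {i \<in> {c+1..n}. sw c S i \<noteq> sw c T i}"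
      hence i: "c < i" "i \<le> n" "sw c S i \<noteq> sw c T i" by auto
      define j where "j = (i - c - 1) div 2"
      define sv where "sv = (if even (i - c - 1) then i + 1 else i - 1)"
      have sS: "\<And>X. sw c X i = (if j \<in> X then sv else i)" unfolding sw_def j_def sv_def using i by simp
      have "j \<in> T" "j \<notin> S" using i(3) ST unfolding sS by (auto split: if_splits)
      moreover have "i = c + 2*j+1 \<or> i = c+2*j+2" using i(1) unfolding j_def by presburger
      ultimately show "i \<in> (\<Union>j\<in>T - S. {c+2*j+1, c+2*j+2})" by auto
    next
      assume "i \<in> (\<Union>j\<in>T - S. {c+2*j+1, c+2*j+2})"
      then obtain j where j: "j \<in> T" "j \<notin> S" "i = c+2*j+1 \<or> i = c+2*j+2" by auto
      have "j < m" using j ST by auto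
      hence le: "i \<le> n" "c < i" using j n by auto
      have jd: "(i - c - 1) div 2 = j" using j(3) by auto
      have "sw c S i = i" using jd j unfolding sw_def by auto
      moreover have "sw c T i \<noteq> i" using jd j le unfolding sw_def by auto
      ultimately show "i \<in> {i \<in> {c+1..n}. sw c S i \<noteq> sw c T i}" using le by auto
    qed
  qed
  have fin: "finite (T - S)" using ST finite_subset by blast
  have "card (\<Union>j\<in>T - S. {c+2*j+1, c+2*j+2}) = (\<Sum>j\<in>T - S. card {c+2*j+1, c+2*j+2})"
    by (rule card_UN_disjoint) (use fin in auto)
  also have "\<dots> = (\<Sum>j\<in>T - S. 2)" by simp
  finally show ?thesis unfolding eq by simp
qed

definition rho :: "nat \<Rightarrow> nat list \<Rightarrow> nat set \<Rightarrow> nat \<Rightarrow> nat" where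
  "rho c L S = mkp L \<circ> sw c S"

definition lcnt :: "nat list \<Rightarrow> nat list \<Rightarrow> nat" where
  "lcnt L1 L2 = length (filter (\<lambda>i. L1!i \<noteq> L2!i) [0..<length L1])"

lemma rho_le: "length L = c \<Longrightarrow> 1 \<le> i \<Longrightarrow> i \<le> c \<Longrightarrow> rho c L S i = L!(i-1)"
  unfolding rho_def mkp_def by (simp add: sw_le)

lemma rho_gt: "length L = c \<Longrightarrow> c < i \<Longrightarrow> rho c L S i = sw c S i"
  unfolding rho_def mkp_def using sw_gt[of c i S] by simp

lemma mk_cnt:
  assumes "length L1 = c" "length L2 = c"
  shows "card {i \<in> {1..c}. rho c L1 S1 i \<noteq> rho c L2 S2 i} = lcnt L1 L2"
proof -
  have "{i \<in> {1..c}. rho c L1 S1 i \<noteq> rho c L2 S2 i} = Suc ` {j. j < c \<and> L1!j \<noteq> L2!j}"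
  proof (rule set_eqI)
    fix i show "i \<in> {i \<in> {1..c}. rho c L1 S1 i \<noteq> rho c L2 S2 i} \<longleftrightarrow> i \<in> Suc ` {j. j < c \<and> L1!j \<noteq> L2!j}"
      using assms rho_le[of L1 c i S1] rho_le[of L2 c i S2]
      by (cases i) (auto simp: image_iff)
  qed
  hence "card {i \<in> {1..c}. rho c L1 S1 i \<noteq> rho c L2 S2 i} = card {j. j < c \<and> L1!j \<noteq> L2!j}"
    by (simp add: card_image)
  also have "\<dots> = lcnt L1 L2" unfolding lcnt_def length_filter_conv_card using assms
    by (intro arg_cong[where f=card]) auto
  finally show ?thesis .
qed

lemma hd_rho:
  assumes "length L1 = c" "length L2 = c" "S1 \<subseteq> S2" "S2 \<subseteq> {..<m}" "c + 2*m \<le> n"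
  shows "hdist n (rho c L1 S1) (rho c L2 S2) = lcnt L1 L2 + 2 * card (S2 - S1)"
proof -
  have "{i \<in> {1..n}. rho c L1 S1 i \<noteq> rho c L2 S2 i} =
     {i \<in> {1..c}. rho c L1 S1 i \<noteq> rho c L2 S2 i} \<union> {i \<in> {c+1..n}. sw c S1 i \<noteq> sw c S2 i}"
  proof (rule set_eqI)
    fix i
    show "i \<in> {i \<in> {1..n}. rho c L1 S1 i \<noteq> rho c L2 S2 i} \<longleftrightarrow> i \<in> {i \<in> {1..c}. rho c L1 S1 i \<noteq> rho c L2 S2 i} \<union> {i \<in> {c+1..n}. sw c S1 i \<noteq> sw c S2 i}"
    proof (cases "i \<le> c")
      case True thus ?thesis using assms(5) by auto
    next
      case False thus ?thesis using rho_gt[of L1 c i S1] rho_gt[of L2 c i S2] assms(1,2) by auto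
    qed
  qed
  hence "hdist n (rho c L1 S1) (rho c L2 S2) = card {i \<in> {1..c}. rho c L1 S1 i \<noteq> rho c L2 S2 i} + card {i \<in> {c+1..n}. sw c S1 i \<noteq> sw c S2 i}"
    unfolding hdist_def by (simp only:) (rule card_Un_disjoint, auto)
  thus ?thesis using mk_cnt[OF assms(1,2)] sw_diff[OF assms(3,4,5)] by simp
qed

lemma rho_perm:
  assumes "length L = c" "distinct L" "set L = {1..c}" "S \<subseteq> {..<m}" "c + 2*m \<le> n"
  shows "rho c L S permutes {1..n}"
proof -
  have sub: "{1..c} \<subseteq> {1..n}" using assms(5) by auto
  have "mkp L permutes {1..c}" using mkp_perm[OF assms(2)] assms(1,3) by simp
  hence "mkp L permutes {1..n}" using sub by (rule permutes_subset)
  thus ?thesis unfolding rho_def using sw_perm[OF assms(4,5)] by (simp add: permutes_compose)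
qed

lemma rho_inj:
  assumes "length L1 = c" "length L2 = c" "S1 \<subseteq> {..<m}" "S2 \<subseteq> {..<m}"
    and e: "rho c L1 S1 = rho c L2 S2"
  shows "L1 = L2 \<and> S1 = S2"
proof
  show "L1 = L2"
  proof (rule nth_equalityI)
    show "length L1 = length L2" using assms by simp
    fix i assume "i < length L1"
    hence "rho c L1 S1 (Suc i) = L1!i" "rho c L2 S2 (Suc i) = L2!i"
      using rho_le[OF assms(1), of "Suc i" S1] rho_le[OF assms(2), of "Suc i" S2] assms(1) by auto
    thus "L1!i = L2!i" using e by simp
  qed
  show "S1 = S2"
  proof (rule set_eqI)
    fix j
    have "rho c L1 S1 (c+2*j+1) = rho c L2 S2 (c+2*j+1)" using e by simp
    hence "sw c S1 (c+2*j+1) = sw c S2 (c+2*j+1)" using rho_gt assms(1,2) by simp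
    thus "j \<in> S1 \<longleftrightarrow> j \<in> S2" unfolding sw_pair by (auto split: if_splits)
  qed
qed



lemma cardB: "card {S. S \<subseteq> {..<m::nat} \<and> card S + e = t} = (if e \<le> t then m choose (t - e) else 0)"
proof (cases "e \<le> t")
  case True
  hence "{S. S \<subseteq> {..<m::nat} \<and> card S + e = t} = {S. S \<subseteq> {..<m} \<and> card S = t - e}" by auto
  thus ?thesis using True n_subsets[of "{..<m}" "t - e"] by simp
next
  case False
  hence "{S. S \<subseteq> {..<m::nat} \<and> card S + e = t} = {}" by auto
  thus ?thesis using False by simp
qed

lemma constr:
  fixes AL :: "(nat list \<times> nat) list"
  assumes AL: "\<forall>(L,e)\<in>set AL. length L = c \<and> distinct L \<and> set L = {1..c} \<and> lcnt Lid L \<le> \<delta> + 2*e \<and> lcnt L Ls + 2*e \<le> \<delta> + 6"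
    and dAL: "distinct (map fst AL)"
    and Lid: "length Lid = c" "distinct Lid" "set Lid = {1..c}"
    and Ls: "length Ls = c" "distinct Ls" "set Ls = {1..c}" "lcnt Lid Ls = c"
    and t: "t \<ge> 2" and r: "r = 2*t + \<delta>" and m: "m = 2*t - 3" and c: "c = 5 + 2*\<delta>" and n: "c + 2*m \<le> n"
  shows "\<exists>p\<in>Sym n. \<exists>q\<in>Sym n. hdist n p q = 2*r - 1 \<and>
     sum_list (map (\<lambda>(L,e). if e \<le> t then m choose (t - e) else 0) AL) \<le> card (ball_perm n r p \<inter> ball_perm n r q)"
proof -
  define U where "U = {..<m}"
  define p where "p = rho c Lid {}"
  define q where "q = rho c Ls U"
  have pS: "p \<in> Sym n" unfolding Sym_def p_def using rho_perm[OF Lid, of "{}" m n] n by simp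
  have qS: "q \<in> Sym n" unfolding Sym_def q_def using rho_perm[OF Ls(1-3), of U m n] n U_def by simp
  have hpq: "hdist n p q = 2*r - 1" unfolding p_def q_def
    using hd_rho[OF Lid(1) Ls(1), of "{}" U m n] n Ls(4) U_def t r m c by simp
  define B where "B = (\<lambda>e. {S. S \<subseteq> U \<and> card S + e = t})"
  define Sig where "Sig = (SIGMA x:set AL. B (snd x))"
  define f where "f = (\<lambda>(x::nat list \<times> nat, S). rho c (fst x) S)"
  have dA: "distinct AL" using dAL distinct_map by blast
  have finB: "\<And>e. finite (B e)" unfolding B_def U_def by (rule finite_subset[of _ "Pow {..<m}"]) auto
  have "card Sig = (\<Sum>x\<in>set AL. card (B (snd x)))" unfolding Sig_def using finB by simp
  also have "\<dots> = sum_list (map (\<lambda>x. card (B (snd x))) AL)" using dA by (rule sum.distinct_set_conv_list)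
  also have "\<dots> = sum_list (map (\<lambda>(L,e). if e \<le> t then m choose (t - e) else 0) AL)"
    unfolding B_def U_def cardB by (intro arg_cong[where f=sum_list] map_cong) auto
  finally have cS: "card Sig = sum_list (map (\<lambda>(L,e). if e \<le> t then m choose (t - e) else 0) AL)" .
  have mem: "f z \<in> ball_perm n r p \<inter> ball_perm n r q" if z: "z \<in> Sig" for z
  proof -
    obtain L e S where zz: "z = ((L,e),S)" by (metis prod.collapse)
    have LA: "(L,e) \<in> set AL" and S: "S \<subseteq> U" "card S + e = t" using z zz unfolding Sig_def B_def by auto
    have Lp: "length L = c" "distinct L" "set L = {1..c}" "lcnt Lid L \<le> \<delta> + 2*e" "lcnt L Ls + 2*e \<le> \<delta> + 6"
      using AL LA by auto
    have fz: "f z = rho c L S" unfolding f_def zz by simp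
    have SU: "S \<subseteq> {..<m}" using S U_def by simp
    have perm: "rho c L S permutes {1..n}" using rho_perm[OF Lp(1-3) SU n] .
    have h1: "hdist n p (rho c L S) = lcnt Lid L + 2 * card S"
      unfolding p_def using hd_rho[OF Lid(1) Lp(1), of "{}" S m n] SU n by simp
    have h2: "hdist n q (rho c L S) = lcnt L Ls + 2 * card (U - S)"
      unfolding q_def using hd_rho[OF Lp(1) Ls(1) S(1), of m n] U_def n hd_sym by simp
    have cU: "card (U - S) = m - card S" using S(1) U_def by (simp add: card_Diff_subset finite_subset)
    have cm: "card S \<le> m" using card_mono[OF _ SU] by simp
    have "hdist n p (rho c L S) \<le> r" using h1 Lp(4) S(2) r by linarith
    moreover have "hdist n q (rho c L S) \<le> r" using h2 cU cm Lp(5) S(2) r m t by linarith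
    ultimately show ?thesis using perm fz unfolding inI by simp
  qed
  have "card Sig \<le> card (ball_perm n r p \<inter> ball_perm n r q)"
  proof (rule card_inj_on_le[where f=f])
    show "f ` Sig \<subseteq> ball_perm n r p \<inter> ball_perm n r q" using mem by auto
    show "finite (ball_perm n r p \<inter> ball_perm n r q)" using finite_ball by blast
    show "inj_on f Sig"
    proof (rule inj_onI)
      fix z1 z2 assume zs: "z1 \<in> Sig" "z2 \<in> Sig" "f z1 = f z2"
      obtain L1 e1 S1 where z1: "z1 = ((L1,e1),S1)" by (metis prod.collapse)
      obtain L2 e2 S2 where z2: "z2 = ((L2,e2),S2)" by (metis prod.collapse)
      have A1: "(L1,e1) \<in> set AL" "S1 \<subseteq> {..<m}" using zs z1 unfolding Sig_def B_def U_def by auto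
      have A2: "(L2,e2) \<in> set AL" "S2 \<subseteq> {..<m}" using zs z2 unfolding Sig_def B_def U_def by auto
      have l: "length L1 = c" "length L2 = c" using AL A1 A2 by auto
      have "L1 = L2 \<and> S1 = S2" using rho_inj[OF l A1(2) A2(2)] zs z1 z2 unfolding f_def by simp
      moreover hence "e1 = e2" using eq_key_imp_eq_value[OF dAL] A1 A2 by blast
      ultimately show "z1 = z2" using z1 z2 by simp
    qed
  qed
  thus ?thesis using pS qS hpq cS by auto
qed



definition AL5 :: "(nat list \<times> nat) list" where "AL5 = [([1,2,3,4,5], 0), ([2,3,4,5,1], 3), ([2,1,3,4,5], 1), ([1,3,2,4,5], 1), ([1,2,4,3,5], 1), ([1,2,3,5,4], 1), ([5,2,3,4,1], 1), ([3,2,4,5,1], 2), ([2,4,3,5,1], 2), ([2,3,5,4,1], 2), ([2,3,4,1,5], 2), ([1,3,4,5,2], 2::nat)]"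
definition AL7 :: "(nat list \<times> nat) list" where "AL7 = [([1,2,3,4,5,6,7], 0), ([2,3,4,5,6,7,1], 3), ([2,3,1,4,5,6,7], 1), ([1,3,4,2,5,6,7], 1), ([1,2,4,5,3,6,7], 1), ([1,2,3,5,6,4,7], 1), ([1,2,3,4,6,7,5], 1), ([6,2,3,4,5,7,1], 1), ([2,7,3,4,5,6,1], 1), ([4,2,3,5,6,7,1], 2), ([2,5,3,4,6,7,1], 2), ([2,3,6,4,5,7,1], 2), ([2,3,4,7,5,6,1], 2), ([2,3,4,5,1,6,7], 2), ([1,3,4,5,6,2,7], 2), ([1,2,4,5,6,7,3], 2::nat)]"

lemma AL5_ok: "\<forall>(L,e)\<in>set AL5. length L = 5 \<and> distinct L \<and> set L = {1..5} \<and> lcnt [1,2,3,4,5] L \<le> 0 + 2*e \<and> lcnt L [2,3,4,5,1] + 2*e \<le> 0 + 6"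
  by code_simp
lemma AL7_ok: "\<forall>(L,e)\<in>set AL7. length L = 7 \<and> distinct L \<and> set L = {1..7} \<and> lcnt [1,2,3,4,5,6,7] L \<le> 1 + 2*e \<and> lcnt L [2,3,4,5,6,7,1] + 2*e \<le> 1 + 6"
  by code_simp
lemma AL5_d: "distinct (map fst AL5)" by code_simp
lemma AL7_d: "distinct (map fst AL7)" by code_simp
lemma L5: "length [1,2,3,4,5::nat] = 5" "distinct [1,2,3,4,5::nat]" "set [1,2,3,4,5::nat] = {1..5}"
   "length [2,3,4,5,1::nat] = 5" "distinct [2,3,4,5,1::nat]" "set [2,3,4,5,1::nat] = {1..5}" "lcnt [1,2,3,4,5] [2,3,4,5,1] = 5"
  by code_simp+
lemma L7: "length [1,2,3,4,5,6,7::nat] = 7" "distinct [1,2,3,4,5,6,7::nat]" "set [1,2,3,4,5,6,7::nat] = {1..7}"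
   "length [2,3,4,5,6,7,1::nat] = 7" "distinct [2,3,4,5,6,7,1::nat]" "set [2,3,4,5,6,7,1::nat] = {1..7}" "lcnt [1,2,3,4,5,6,7] [2,3,4,5,6,7,1] = 7"
  by code_simp+

lemma binom_facts:
  assumes "t \<ge> (2::nat)"
  shows "(if 3 \<le> t then (2*t-3) choose (t-3) else 0) = (2*t-3) choose t"
    "((2*t-3) choose (t-1)) + ((2*t-3) choose (t-2)) = (2*t-2) choose (t-1)"
proof -
  show "(if 3 \<le> t then (2*t-3) choose (t-3) else 0) = (2*t-3) choose t"
  proof (cases "3 \<le> t")
    case True
    hence "(2*t-3) choose (t-3) = (2*t-3) choose ((2*t-3) - (t-3))" by (intro binomial_symmetric) simp
    moreover have "(2*t-3) - (t-3) = t" using True by simp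
    ultimately show ?thesis using True by simp
  next
    case False
    hence "t = 2" using assms by simp
    thus ?thesis by simp
  qed
  have "(Suc (2*t-3) choose Suc (t-2)) = ((2*t-3) choose (t-2)) + ((2*t-3) choose Suc (t-2))" by simp
  moreover have "Suc (2*t-3) = 2*t-2" "Suc (t-2) = t-1" using assms by auto
  ultimately show "((2*t-3) choose (t-1)) + ((2*t-3) choose (t-2)) = (2*t-2) choose (t-1)" by simp
qed

lemma lower:
  fixes t r n lstar :: nat
  assumes "t \<ge> 2" "r = 2*t \<or> r = 2*t + 1" "lstar = (if r = 2*t then 5 else 7)" "n \<ge> 2*r - 1"
  shows "\<exists>p\<in>Sym n. \<exists>q\<in>Sym n. hdist n p q = 2*r - 1 \<and>
     2 * ((2*t - 3) choose t) + lstar * ((2*t - 2) choose (t - 1)) \<le> card (ball_perm n r p \<inter> ball_perm n r q)"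
  using assms(2)
proof
  assume r: "r = 2*t"
  have "\<exists>p\<in>Sym n. \<exists>q\<in>Sym n. hdist n p q = 2*r - 1 \<and>
     sum_list (map (\<lambda>(L,e). if e \<le> t then (2*t-3) choose (t - e) else 0) AL5) \<le> card (ball_perm n r p \<inter> ball_perm n r q)"
    by (rule constr[OF AL5_ok AL5_d L5, where t=t and r=r and m="2*t-3"]) (use assms r in auto)
  moreover have "sum_list (map (\<lambda>(L,e). if e \<le> t then (2*t-3) choose (t - e) else 0) AL5)
     = 2 * ((2*t - 3) choose t) + lstar * ((2*t - 2) choose (t - 1))"
    using binom_facts[OF assms(1)] assms(1,3) r unfolding AL5_def by simp
  ultimately show ?thesis by simp
next
  assume r: "r = 2*t + 1"
  have "\<exists>p\<in>Sym n. \<exists>q\<in>Sym n. hdist n p q = 2*r - 1 \<and>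
     sum_list (map (\<lambda>(L,e). if e \<le> t then (2*t-3) choose (t - e) else 0) AL7) \<le> card (ball_perm n r p \<inter> ball_perm n r q)"
    by (rule constr[OF AL7_ok AL7_d L7, where t=t and r=r and m="2*t-3"]) (use assms r in auto)
  moreover have "sum_list (map (\<lambda>(L,e). if e \<le> t then (2*t-3) choose (t - e) else 0) AL7)
     = 2 * ((2*t - 3) choose t) + lstar * ((2*t - 2) choose (t - 1))"
    using binom_facts[OF assms(1)] assms(1,3) r unfolding AL7_def by simp
  ultimately show ?thesis by simp
qed



lemma id_Sym: "id \<in> Sym n" unfolding Sym_def by (simp add: permutes_id)

lemma le2r:
  assumes p: "p \<in> Sym n" and q: "q \<in> Sym n" and h: "hdist n p q = 2*r" and r2: "r \<ge> 2"
  shows "card (ball_perm n r p \<inter> ball_perm n r q) \<le> Iint n (2*r - 1) r"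
proof -
  define s where "s = inv p \<circ> q"
  have sS: "s \<in> Sym n" and hs: "hdist n id s = 2*r"
    and c1: "card (ball_perm n r p \<inter> ball_perm n r q) \<le> card (ball_perm n r id \<inter> ball_perm n r s)"
    using norm(1,2)[OF p q] norm(3)[OF p q, where r=r] h unfolding s_def by auto
  have sp: "s permutes {1..n}" using sS unfolding Sym_def by simp
  have "\<exists>s'\<in>Sym n. hdist n id s' = 2*r - 1 \<and> card (ball_perm n r id \<inter> ball_perm n r s) \<le> card (ball_perm n r id \<inter> ball_perm n r s')"
  proof (cases "\<exists>a\<in>{1..n}. s a \<noteq> a \<and> s (s a) \<noteq> a")
    case True
    then obtain a where "a \<in> {1..n}" "s a \<noteq> a" "s (s a) \<noteq> a" by blast
    thus ?thesis using keyA[OF sp hs] by blast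
  next
    case False
    hence "\<And>a. a \<in> {1..n} \<Longrightarrow> s a \<noteq> a \<Longrightarrow> s (s a) = a" by blast
    thus ?thesis using keyB[OF sp hs r2] by blast
  qed
  then obtain s' where s': "s' \<in> Sym n" "hdist n id s' = 2*r - 1"
    "card (ball_perm n r id \<inter> ball_perm n r s) \<le> card (ball_perm n r id \<inter> ball_perm n r s')" by blast
  have "card (ball_perm n r id \<inter> ball_perm n r s') \<le> Iint n (2*r - 1) r"
    by (rule Iint_ge[OF id_Sym s'(1) s'(2)])
  thus ?thesis using c1 s'(3) by linarith
qed

lemma leN:
  assumes p: "p \<in> Sym n" and q: "q \<in> Sym n" and h: "hdist n p q \<ge> 2*r - 1" and r2: "r \<ge> 2"
  shows "card (ball_perm n r p \<inter> ball_perm n r q) \<le> Iint n (2*r - 1) r"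
proof -
  consider "hdist n p q = 2*r - 1" | "hdist n p q = 2*r" | "hdist n p q > 2*r" using h by linarith
  thus ?thesis
  proof cases
    case 1 thus ?thesis using Iint_ge[OF p q] by blast
  next
    case 2 thus ?thesis using le2r[OF p q _ r2] by blast
  next
    case 3 thus ?thesis using disjoint_far[OF 3] by simp
  qed
qed

theorem theorem2:
  fixes t r n :: nat and lstar :: nat
  assumes "t \<ge> 2"
    and "r = 2*t \<or> r = 2*t + 1"
    and "lstar = (if r = 2*t then 5 else 7)"
  shows "(n \<ge> 2*r - 1 \<longrightarrow>
            Iint n (2*r - 1) r \<ge> 2 * ((2*t - 3) choose t) + lstar * ((2*t - 2) choose (t - 1)))
       \<and> (n \<ge> 2*r \<longrightarrow>
            Nint n (2*r - 1) r = Iint n (2*r - 1) r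
          \<and> Iint n (2*r - 1) r \<ge> Nint n (2*r) r
          \<and> Nint n (2*r - 1) r \<ge> 2 * ((2*t - 3) choose t) + lstar * ((2*t - 2) choose (t - 1)))"
proof -
  define B where "B = 2 * ((2*t - 3) choose t) + lstar * ((2*t - 2) choose (t - 1))"
  have r2: "r \<ge> 2" using assms by auto
  have P1: "B \<le> Iint n (2*r - 1) r \<and> (\<exists>p\<in>Sym n. \<exists>q\<in>Sym n. hdist n p q = 2*r - 1)" if n: "n \<ge> 2*r - 1"
  proof -
    obtain p q where pq: "p \<in> Sym n" "q \<in> Sym n" "hdist n p q = 2*r - 1"
      "B \<le> card (ball_perm n r p \<inter> ball_perm n r q)"
      using lower[OF assms n] unfolding B_def by blast
    thus ?thesis using Iint_ge[OF pq(1-3), of r] by auto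
  qed
  have P2: "Nint n (2*r - 1) r = Iint n (2*r - 1) r \<and> Iint n (2*r - 1) r \<ge> Nint n (2*r) r" if n: "n \<ge> 2*r"
  proof -
    obtain p0 q0 where w: "p0 \<in> Sym n" "q0 \<in> Sym n" "hdist n p0 q0 = 2*r - 1" using P1[of] n by (meson diff_le_self le_trans)
    have a1: "Nint n (2*r - 1) r \<le> Iint n (2*r - 1) r"
      by (rule Nint_le[OF w(1,2)]) (use w(3) leN r2 in auto)
    obtain p q where pq: "p \<in> Sym n" "q \<in> Sym n" "hdist n p q = 2*r - 1"
      "Iint n (2*r - 1) r = card (ball_perm n r p \<inter> ball_perm n r q)"
      using Iint_attained[OF w] by blast
    have a2: "Iint n (2*r - 1) r \<le> Nint n (2*r - 1) r" using Nint_ge[OF pq(1,2)] pq(3,4) by simp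
    define p1 where "p1 = rho 0 [] {}"
    define q1 where "q1 = rho 0 [] {..<r}"
    have p1S: "p1 \<in> Sym n" unfolding Sym_def p1_def using rho_perm[of "[]" 0 "{}" r n] n by simp
    have q1S: "q1 \<in> Sym n" unfolding Sym_def q1_def using rho_perm[of "[]" 0 "{..<r}" r n] n by simp
    have h1: "hdist n p1 q1 = 2*r" unfolding p1_def q1_def
      using hd_rho[of "[]" 0 "[]" "{}" "{..<r}" r n] n by (simp add: lcnt_def)
    have a3: "Nint n (2*r) r \<le> Iint n (2*r - 1) r"
      by (rule Nint_le[OF p1S q1S]) (use h1 leN r2 in auto)
    show ?thesis using a1 a2 a3 by simp
  qed
  show ?thesis using P1 P2 unfolding B_def by auto
qed


end
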